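(* Let $\Lambda$ be a generalized Pauli channel on $(\mathbb C^2)^{\otimes n}$ and $\Lambda_E$ its complementary (environment) channel. Then the Holevo information of the ensemble in which $x\in\mathbb F_2^n$ is chosen uniformly and the state $\Lambda_E(|x\rangle\langle x|)$ is prepared satisfies $$\chi\Big(\{2^{-n},\Lambda_E(|x\rangle\langle x|)\}_{x\in\mathbb F_2^n}\Big)\le \eta_n\big(1-P_{\Lambda,Z}(0)\big).$$
   Context: $\{|x\rangle\}_{x\in\mathbb F_2^n}$ is the computational basis of $(\mathbb C^2)^{\otimes n}$. Unitaries $\mathbf X^x|x'\rangle=|x'-x\rangle$, $\mathbf Z^z|x'\rangle=(-1)^{x'\cdot z}|x'\rangle$ with $x'\cdot z=\sum_i x'_iz_i\in\mathbb F_2$. A channel $\Lambda$ is generalized Pauli if $\Lambda(\rho)=\sum_{x,z\in\mathbb F_2^n}P_\Lambda(x,z)\,\mathbf X^x\mathbf Z^z\rho(\mathbf X^x\mathbf Z^z)^\dagger$ for a probability distribution $P_\Lambda$ on $\mathbb F_2^n\times\mathbb F_2^n$; $P_{\Lambda,Z}(z)=\sum_xP_\Lambda(x,z)$. For a Stinespring isometry $V:\mathcal H\to\mathcal H\otimes\mathcal H_E$ with $\Lambda(\rho)=\mathrm{Tr}_E V\rho V^\dagger$, the complementary channel is $\Lambda_E(\rho)=\mathrm{Tr}_{\mathcal H}V\rho V^\dagger$ (Holevo quantities do not depend on the choice). The Holevo information of an ensemble $\{p_i,\rho_i\}$ is $\chi=S(\sum_ip_i\rho_i)-\sum_ip_iS(\rho_i)$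 with von Neumann entropy $S$ in base 2. $h$ is the binary entropy (base 2), $\bar h(x)=h(x)$ for $x<1/2$ and $\bar h(x)=1$ for $x\ge1/2$, and $\eta_k(x)=\bar h(x)+kx$. *)

theory Defs
  imports "Jordan_Normal_Form.Schur_Decomposition" "HOL-Computational_Algebra.Polynomial"
begin

(* n-qubit Hilbert space (C^2)^{\<otimes> n} has dimension 2^n; computational basis vector |x>,
   x \<in> F_2^n, is encoded as the natural number x < 2^n whose i-th bit is x_i. *)

definition f2dot :: "nat \<Rightarrow> nat \<Rightarrow> nat \<Rightarrow> bool" where
  "f2dot n x z = odd (card {i. i < n \<and> bit x i \<and> bit z i})"

definition pauliX :: "nat \<Rightarrow> nat \<Rightarrow> complex mat" where
  "pauliX n x = mat (2^n) (2^n) (\<lambda>(i,j). if i = xor j x then 1 else 0)"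

definition pauliZ :: "nat \<Rightarrow> nat \<Rightarrow> complex mat" where
  "pauliZ n z = mat (2^n) (2^n) (\<lambda>(i,j). if i = j then (if f2dot n i z then -1 else 1) else 0)"

definition pauli_dist :: "nat \<Rightarrow> (nat \<Rightarrow> nat \<Rightarrow> real) \<Rightarrow> bool" where
  "pauli_dist n P \<longleftrightarrow> (\<forall>x<2^n. \<forall>z<2^n. P x z \<ge> 0) \<and> (\<Sum>x<2^n. \<Sum>z<2^n. P x z) = 1"

definition pauli_channel :: "nat \<Rightarrow> (nat \<Rightarrow> nat \<Rightarrow> real) \<Rightarrow> complex mat \<Rightarrow> complex mat" where
  "pauli_channel n P \<rho> = mat (2^n) (2^n) (\<lambda>(i,j).
     \<Sum>x<2^n. \<Sum>z<2^n. complex_of_real (P x z) *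
        ((pauliX n x * pauliZ n z) * \<rho> * mat_adjoint (pauliX n x * pauliZ n z)) $$ (i,j))"

definition PZ :: "nat \<Rightarrow> (nat \<Rightarrow> nat \<Rightarrow> real) \<Rightarrow> nat \<Rightarrow> real" where
  "PZ n P z = (\<Sum>x<2^n. P x z)"

(* H \<otimes> H_E with dim H = d, dim H_E = e; basis |i>\<otimes>|k> has index i*e + k *)
definition ptrace_E :: "nat \<Rightarrow> nat \<Rightarrow> complex mat \<Rightarrow> complex mat" where
  "ptrace_E d e M = mat d d (\<lambda>(i,j). \<Sum>k<e. M $$ (i*e+k, j*e+k))"

definition ptrace_H :: "nat \<Rightarrow> nat \<Rightarrow> complex mat \<Rightarrow> complex mat" where
  "ptrace_H d e M = mat e e (\<lambda>(k,l). \<Sum>i<d. M $$ (i*e+k, i*e+l))"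

definition stinespring :: "nat \<Rightarrow> nat \<Rightarrow> (complex mat \<Rightarrow> complex mat) \<Rightarrow> complex mat \<Rightarrow> bool" where
  "stinespring d e \<Lambda> V \<longleftrightarrow> V \<in> carrier_mat (d*e) d \<and> mat_adjoint V * V = 1\<^sub>m d \<and>
     (\<forall>\<rho> \<in> carrier_mat d d. \<Lambda> \<rho> = ptrace_E d e (V * \<rho> * mat_adjoint V))"

definition compl_channel :: "nat \<Rightarrow> nat \<Rightarrow> complex mat \<Rightarrow> complex mat \<Rightarrow> complex mat" where
  "compl_channel d e V \<rho> = ptrace_H d e (V * \<rho> * mat_adjoint V)"

definition ket_bra :: "nat \<Rightarrow> nat \<Rightarrow> complex mat" where
  "ket_bra d x = mat d d (\<lambda>(i,j). if i = x \<and> j = x then 1 else 0)"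

definition ent_term :: "real \<Rightarrow> real" where
  "ent_term t = (if t \<le> 0 then 0 else - t * log 2 t)"

(* von Neumann entropy (base 2): sum over eigenvalues with multiplicity
   (roots of the characteristic polynomial; real for Hermitian matrices) *)
definition vn_entropy :: "complex mat \<Rightarrow> real" where
  "vn_entropy \<rho> = sum_mset (image_mset (\<lambda>\<mu>. ent_term (Re \<mu>)) (proots (char_poly \<rho>)))"

definition holevo :: "nat \<Rightarrow> nat \<Rightarrow> (nat \<Rightarrow> real) \<Rightarrow> (nat \<Rightarrow> complex mat) \<Rightarrow> real" where
  "holevo d K p \<rho>s = vn_entropy (mat d d (\<lambda>(i,j). \<Sum>k<K. complex_of_real (p k) * \<rho>s k $$ (i,j)))
     - (\<Sum>k<K. p k * vn_entropy (\<rho>s k))"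

definition bin_ent :: "real \<Rightarrow> real" where
  "bin_ent x = ent_term x + ent_term (1 - x)"

definition hbar :: "real \<Rightarrow> real" where
  "hbar x = (if x < 1/2 then bin_ent x else 1)"

definition eta :: "nat \<Rightarrow> real \<Rightarrow> real" where
  "eta k x = hbar x + real k * x"

end

theory Submission
  imports Defs
begin


lemma gibbs_pt:
  assumes p: "p \<ge> 0" and c: "c > 0"
  shows "ent_term p \<le> - p * log 2 c + (c - p) / ln 2"
proof (cases "p = 0")
  case True then show ?thesis using c by (simp add: ent_term_def)
next
  case False
  with p have p0: "p > 0" by simp
  have "ln (c / p) \<le> c / p - 1" using c p0 by (intro ln_le_minus_one) simp
  then have "p * ln (c / p) \<le> p * (c / p - 1)" using p0 by (intro mult_left_mono) auto
  also have "\<dots> = c - p" using p0 by (simp add: field_simps)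
  finally have *: "p * (ln c - ln p) \<le> c - p" using c p0 by (simp add: ln_div)
  have "ent_term p + p * log 2 c = p * (ln c - ln p) / ln 2"
    using p0 by (simp add: ent_term_def log_def field_simps)
  also have "\<dots> \<le> (c - p) / ln 2" using * by (intro divide_right_mono) auto
  finally show ?thesis by simp
qed

lemma ent_term_eq: "t \<ge> 0 \<Longrightarrow> ent_term t = - t * log 2 t"
  by (simp add: ent_term_def)

lemma cond_pt:
  assumes p: "p \<ge> 0" and X: "X \<ge> p" and Z: "Z \<ge> p"
  shows "ent_term p + p * log 2 X + p * log 2 Z \<le> (X * Z - p) / ln 2"
proof (cases "p = 0")
  case True then show ?thesis using X Z by (simp add: ent_term_def)
next
  case False
  with p have p0: "p > 0" by simp
  then have X0: "X > 0" and Z0: "Z > 0" using X Z by auto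
  have "ent_term p \<le> - p * log 2 (X * Z) + (X * Z - p) / ln 2"
    by (rule gibbs_pt) (use p X0 Z0 in auto)
  also have "log 2 (X * Z) = log 2 X + log 2 Z" using X0 Z0 by (simp add: log_mult)
  finally show ?thesis by (simp add: algebra_simps)
qed

lemma bin_ent_le1:
  assumes "0 \<le> q" "q \<le> 1"
  shows "bin_ent q \<le> 1"
proof -
  have a: "ent_term q \<le> - q * log 2 (1/2) + (1/2 - q) / ln 2" by (rule gibbs_pt) (use assms in auto)
  have b: "ent_term (1 - q) \<le> - (1 - q) * log 2 (1/2) + (1/2 - (1 - q)) / ln 2" by (rule gibbs_pt) (use assms in auto)
  have l: "log 2 (1/2) = -1" by (simp add: log_divide)
  have "bin_ent q \<le> q + (1/2 - q) / ln 2 + (1 - q) + (1/2 - (1 - q)) / ln 2"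
    using a b unfolding bin_ent_def l by simp
  also have "\<dots> = 1" by (simp add: field_simps)
  finally show ?thesis .
qed

lemma gibbs_sum:
  assumes S: "finite S" and p: "\<And>b. b \<in> S \<Longrightarrow> p b \<ge> 0" and sq: "sum p S = q" and q: "q > 0"
    and cardS: "real (card S) \<le> N" and N: "N > 0"
  shows "(\<Sum>b\<in>S. ent_term (p b)) \<le> ent_term q + q * log 2 N"
proof -
  have "(\<Sum>b\<in>S. ent_term (p b)) \<le> (\<Sum>b\<in>S. - p b * log 2 (q / N) + (q / N - p b) / ln 2)"
    by (intro sum_mono gibbs_pt) (use p q N in auto)
  also have "\<dots> = - q * log 2 (q / N) + (real (card S) * (q / N) - q) / ln 2"
    using sq by (simp add: sum.distrib sum_divide_distrib[symmetric] sum_subtractf sum_distrib_right[symmetric])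
  also have "real (card S) * (q / N) - q \<le> 0"
  proof -
    have "real (card S) * (q / N) \<le> N * (q / N)" using cardS q N by (intro mult_right_mono) auto
    also have "\<dots> = q" using N by simp
    finally show ?thesis by simp
  qed
  then have "(real (card S) * (q / N) - q) / ln 2 \<le> 0" by (simp add: divide_nonpos_pos)
  also have "log 2 (q / N) = log 2 q - log 2 N" using q N by (simp add: log_divide)
  finally show ?thesis using q by (simp add: ent_term_def algebra_simps)
qed



lemma ent_sum_split:
  assumes "\<And>b. b \<in> S \<Longrightarrow> f b \<ge> (0::real)"
  shows "ent_term (sum f S) = (\<Sum>b\<in>S. - f b * log 2 (sum f S))"
proof -
  have "sum f S \<ge> 0" using assms by (intro sum_nonneg) auto
  then have "ent_term (sum f S) = - sum f S * log 2 (sum f S)" by (rule ent_term_eq)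
  also have "\<dots> = (\<Sum>b\<in>S. - f b) * log 2 (sum f S)" by (simp add: sum_negf)
  also have "\<dots> = (\<Sum>b\<in>S. - f b * log 2 (sum f S))" by (rule sum_distrib_right)
  finally show ?thesis .
qed

lemma info_ineq:
  assumes pd: "pauli_dist n P"
  shows "(\<Sum>a<2^n. \<Sum>b<2^n. ent_term (P a b)) - (\<Sum>a<2^n. ent_term (\<Sum>b<2^n. P a b))
     \<le> eta n (1 - PZ n P 0)"
proof -
  define N where "N = (2::nat)^n"
  have N0: "N > 0" by (simp add: N_def)
  have nn: "\<And>a b. a < N \<Longrightarrow> b < N \<Longrightarrow> P a b \<ge> 0" using pd by (simp add: pauli_dist_def N_def)
  have tot: "(\<Sum>a<N. \<Sum>b<N. P a b) = 1" using pd by (simp add: pauli_dist_def N_def)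
  define PX where "PX a = (\<Sum>b<N. P a b)" for a
  define Pz where "Pz b = (\<Sum>a<N. P a b)" for b
  have PZe: "PZ n P 0 = Pz 0" by (simp add: PZ_def Pz_def N_def)
  have PXn: "\<And>a. a < N \<Longrightarrow> PX a \<ge> 0" unfolding PX_def by (intro sum_nonneg) (auto simp: nn)
  have Pzn: "\<And>b. b < N \<Longrightarrow> Pz b \<ge> 0" unfolding Pz_def by (intro sum_nonneg) (auto simp: nn)
  have PXle: "\<And>a b. a < N \<Longrightarrow> b < N \<Longrightarrow> P a b \<le> PX a"
    unfolding PX_def by (rule member_le_sum) (auto simp: nn)
  have Pzle: "\<And>a b. a < N \<Longrightarrow> b < N \<Longrightarrow> P a b \<le> Pz b"
    unfolding Pz_def by (rule member_le_sum[where f="\<lambda>a. P a b" for b]) (auto simp: nn)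
  have sPX: "(\<Sum>a<N. PX a) = 1" using tot by (simp add: PX_def)
  have sPz: "(\<Sum>b<N. Pz b) = 1" unfolding Pz_def by (subst sum.swap) (rule tot)
  define HP where "HP = (\<Sum>a<N. \<Sum>b<N. ent_term (P a b))"
  define HX where "HX = (\<Sum>a<N. ent_term (PX a))"
  define HZ where "HZ = (\<Sum>b<N. ent_term (Pz b))"
  have HXe: "HX = (\<Sum>a<N. \<Sum>b<N. - P a b * log 2 (PX a))"
    unfolding HX_def PX_def by (intro sum.cong refl ent_sum_split) (auto simp: nn)
  have HZe: "HZ = (\<Sum>a<N. \<Sum>b<N. - P a b * log 2 (Pz b))"
    unfolding HZ_def
    unfolding Pz_def by (subst sum.swap) (intro sum.cong refl ent_sum_split, auto simp: nn)
  have c1: "HP - HX - HZ \<le> 0"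
  proof -
    have "HP - HX - HZ = (\<Sum>a<N. \<Sum>b<N. ent_term (P a b) + P a b * log 2 (PX a) + P a b * log 2 (Pz b))"
      unfolding HP_def HXe HZe by (simp add: sum.distrib sum_subtractf sum_negf)
    also have "\<dots> \<le> (\<Sum>a<N. \<Sum>b<N. (PX a * Pz b - P a b) / ln 2)"
      by (intro sum_mono cond_pt) (auto simp: nn PXle Pzle)
    also have "\<dots> = ((\<Sum>a<N. PX a) * (\<Sum>b<N. Pz b) - (\<Sum>a<N. \<Sum>b<N. P a b)) / ln 2"
      by (simp add: sum_divide_distrib[symmetric] sum_subtractf sum_product)
    also have "\<dots> = 0" using sPX sPz tot by simp
    finally show ?thesis .
  qed
  define q where "q = 1 - Pz 0"
  have q0: "q \<ge> 0" and q1: "q \<le> 1"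
  proof -
    have "Pz 0 \<le> (\<Sum>b<N. Pz b)" by (rule member_le_sum) (use N0 Pzn in auto)
    then show "q \<ge> 0" using sPz by (simp add: q_def)
    show "q \<le> 1" using Pzn[OF N0] by (simp add: q_def)
  qed
  have split: "\<And>f :: nat \<Rightarrow> real. (\<Sum>b<N. f b) = f 0 + (\<Sum>b\<in>{1..<N}. f b)"
  proof -
    fix f :: "nat \<Rightarrow> real"
    have "{..<N} = insert 0 {1..<N}" using N0 by auto
    then show "(\<Sum>b<N. f b) = f 0 + (\<Sum>b\<in>{1..<N}. f b)" by simp
  qed
  have sq: "(\<Sum>b\<in>{1..<N}. Pz b) = q" using sPz split[of Pz] by (simp add: q_def)
  have c2: "HZ \<le> bin_ent q + real n * q"
  proof -
    have "(\<Sum>b\<in>{1..<N}. ent_term (Pz b)) \<le> ent_term q + q * real n"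
    proof (cases "q > 0")
      case True
      have "(\<Sum>b\<in>{1..<N}. ent_term (Pz b)) \<le> ent_term q + q * log 2 (real N)"
        by (rule gibbs_sum[OF _ _ sq True]) (auto simp: Pzn N0)
      also have "log 2 (real N) = real n" by (simp add: N_def log_nat_power)
      finally show ?thesis .
    next
      case False
      then have "q = 0" using q0 by simp
      then have "\<forall>b\<in>{1..<N}. Pz b = 0" using sq by (subst sum_nonneg_eq_0_iff[symmetric]) (auto simp: Pzn)
      then show ?thesis using \<open>q = 0\<close> by (simp add: ent_term_def)
    qed
    moreover have "HZ = ent_term (1 - q) + (\<Sum>b\<in>{1..<N}. ent_term (Pz b))"
      unfolding HZ_def by (subst split) (simp add: q_def)
    ultimately show ?thesis by (simp add: bin_ent_def algebra_simps)
  qed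
  have c3: "bin_ent q \<le> hbar q" using bin_ent_le1[OF q0 q1] by (simp add: hbar_def)
  have "HP - HX \<le> eta n q" using c1 c2 c3 by (simp add: eta_def)
  then show ?thesis by (simp add: HP_def HX_def PX_def N_def q_def PZe)
qed



lemma ent_term_nonneg_eq: "t \<ge> 0 \<Longrightarrow> ent_term t = - t * log 2 t"
  by (simp add: ent_term_def)

lemma vn_entropy_char_poly:
  assumes "char_poly A = (\<Prod>a\<leftarrow>as. [:- a, 1:])"
  shows "vn_entropy A = (\<Sum>a\<leftarrow>as. ent_term (Re a))"
proof -
  have "proots (char_poly A) = mset as"
    unfolding assms
  proof (induct as)
    case (Cons a as)
    have nz: "(\<Prod>a\<leftarrow>as. [:- a, 1:]) \<noteq> (0::complex poly)" by (auto simp add: prod_list_zero_iff)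
    have nz2: "[:- a, 1:] \<noteq> (0::complex poly)" by simp
    have "proots (\<Prod>a\<leftarrow>a # as. [:- a, 1:]) = proots [:- a, 1:] + proots (\<Prod>a\<leftarrow>as. [:- a, 1:])"
      unfolding list.map prod_list.Cons by (rule proots_mult[OF nz2 nz])
    then show ?case using Cons by simp
  qed simp
  then show ?thesis unfolding vn_entropy_def
    by (simp add: mset_map[symmetric] sum_mset_sum_list del: mset_map)
qed

lemma vn_entropy_upper_triangular:
  assumes A: "A \<in> carrier_mat N N" and ut: "upper_triangular A"
  shows "vn_entropy A = (\<Sum>i<N. ent_term (Re (A $$ (i,i))))"
proof -
  have "vn_entropy A = (\<Sum>a\<leftarrow>diag_mat A. ent_term (Re a))"
    by (rule vn_entropy_char_poly, rule char_poly_upper_triangular[OF A ut])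
  also have "\<dots> = (\<Sum>i<N. ent_term (Re (A $$ (i,i))))"
    using A by (simp add: diag_mat_def sum_list_sum_nth atLeast0LessThan)
  finally show ?thesis .
qed

lemma char_poly_zero_mat: "char_poly (0\<^sub>m k k :: complex mat) = [:0, 1:] ^ k"
proof -
  have "char_poly (0\<^sub>m k k :: complex mat) = (\<Prod>a\<leftarrow>diag_mat (0\<^sub>m k k :: complex mat). [:- a, 1:])"
    by (rule char_poly_upper_triangular[of _ k]) auto
  also have "diag_mat (0\<^sub>m k k :: complex mat) = replicate k 0"
    by (rule nth_equalityI) (auto simp: diag_mat_def)
  finally show ?thesis by (simp add: prod_list_replicate)
qed

lemma char_poly_sylvester:
  fixes A B :: "complex mat"
  assumes A: "A \<in> carrier_mat m k" and B: "B \<in> carrier_mat k m"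
  shows "char_poly (A * B) * [:0, 1:] ^ k = [:0, 1:] ^ m * char_poly (B * A)"
proof -
  define X where "X = four_block_mat (A * B) (0\<^sub>m m k) B (0\<^sub>m k k)"
  define Y where "Y = four_block_mat (0\<^sub>m m m) (0\<^sub>m m k) B (B * A)"
  define S where "S = four_block_mat (1\<^sub>m m) A (0\<^sub>m k m) (1\<^sub>m k)"
  define T where "T = four_block_mat (1\<^sub>m m) (- A) (0\<^sub>m k m) (1\<^sub>m k)"
  have AB: "A * B \<in> carrier_mat m m" and BA: "B * A \<in> carrier_mat k k" using A B by auto
  have cX: "char_poly X = char_poly (A * B) * char_poly (0\<^sub>m k k)"
    unfolding X_def
    by (rule char_poly_0_block'[OF refl _ _ AB B], insert char_poly_factorized[OF AB]
        char_poly_factorized[of "0\<^sub>m k k" k], auto)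
  have cY: "char_poly Y = char_poly (0\<^sub>m m m) * char_poly (B * A)"
    unfolding Y_def
    by (rule char_poly_0_block'[OF refl _ _ _ B BA], insert char_poly_factorized[OF BA]
        char_poly_factorized[of "0\<^sub>m m m" m], auto)
  have c1: "1\<^sub>m m \<in> carrier_mat m m" "1\<^sub>m k \<in> carrier_mat k k" "0\<^sub>m k m \<in> carrier_mat k m"
    "0\<^sub>m m k \<in> carrier_mat m k" "0\<^sub>m m m \<in> carrier_mat m m" "0\<^sub>m k k \<in> carrier_mat k k"
    "- A \<in> carrier_mat m k" using A by auto
  have mz: "- 0\<^sub>m k k + 1\<^sub>m k = (1\<^sub>m k :: complex mat)" by (rule eq_matI) auto
  have mz2: "A + - A = 0\<^sub>m m k" using A by (intro eq_matI) auto
  have ST: "S * T = 1\<^sub>m (m + k)" unfolding S_def T_def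
    apply (subst mult_four_block_mat[OF c1(1) A c1(3) c1(2) c1(1) c1(7) c1(3) c1(2)])
    apply (subst four_block_one_mat[symmetric])
    using A apply (simp add: mz mz2)
    done
  have TS: "T * S = 1\<^sub>m (m + k)" unfolding S_def T_def
    apply (subst mult_four_block_mat[OF c1(1) c1(7) c1(3) c1(2) c1(1) A c1(3) c1(2)])
    apply (subst four_block_one_mat[symmetric])
    using A apply (simp add: mz mz2)
    done
  have XS: "X * S = S * Y" unfolding X_def S_def Y_def
    apply (subst mult_four_block_mat[OF AB c1(4) B c1(6) c1(1) A c1(3) c1(2)])
    apply (subst mult_four_block_mat[OF c1(1) A c1(3) c1(2) c1(5) c1(4) B BA])
    using A B AB BA apply (simp add: assoc_mult_mat[OF A B A])
    done
  have "similar_mat X Y"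
  proof (rule similar_matI[where n="m+k" and P=S and Q=T])
    show "{X, Y, S, T} \<subseteq> carrier_mat (m + k) (m + k)" unfolding X_def Y_def S_def T_def
      using A B by auto
    show "S * T = 1\<^sub>m (m + k)" by fact
    show "T * S = 1\<^sub>m (m + k)" by fact
    have cS: "S \<in> carrier_mat (m+k) (m+k)" "T \<in> carrier_mat (m+k) (m+k)"
      "X \<in> carrier_mat (m+k) (m+k)" "Y \<in> carrier_mat (m+k) (m+k)"
      unfolding X_def Y_def S_def T_def using A B by auto
    have "X = X * (S * T)" using ST cS by simp
    also have "\<dots> = (X * S) * T" using cS by (simp add: assoc_mult_mat)
    also have "\<dots> = S * Y * T" using XS by simp
    finally show "X = S * Y * T" .
  qed
  from char_poly_similar[OF this] cX cY show ?thesis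
    by (simp add: char_poly_zero_mat mult.commute)
qed

lemma char_poly_nz: assumes "A \<in> carrier_mat n n" shows "char_poly (A :: complex mat) \<noteq> 0"
proof
  assume "char_poly A = 0"
  with degree_monic_char_poly[OF assms] show False by simp
qed

lemma ent_sum_zero_roots:
  fixes p :: "complex poly" assumes "p \<noteq> 0"
  shows "sum_mset (image_mset (\<lambda>\<mu>. ent_term (Re \<mu>)) (proots (p * [:0, 1:] ^ j)))
       = sum_mset (image_mset (\<lambda>\<mu>. ent_term (Re \<mu>)) (proots p))"
proof -
  have nz: "[:0, 1:] ^ j \<noteq> (0 :: complex poly)" by simp
  have "proots (p * [:0, 1:] ^ j) = proots p + repeat_mset j {#0#}"
    by (simp add: proots_mult[OF assms nz] proots_power)
  moreover have "sum_mset (image_mset (\<lambda>\<mu>. ent_term (Re \<mu>)) (repeat_mset j {#0::complex#})) = 0"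
    by (induct j) (auto simp: ent_term_def)
  ultimately show ?thesis by simp
qed

lemma vn_entropy_sylvester:
  fixes A B :: "complex mat"
  assumes A: "A \<in> carrier_mat m k" and B: "B \<in> carrier_mat k m"
  shows "vn_entropy (A * B) = vn_entropy (B * A)"
proof -
  have AB: "A * B \<in> carrier_mat m m" and BA: "B * A \<in> carrier_mat k k" using A B by auto
  have "vn_entropy (A * B) = sum_mset (image_mset (\<lambda>\<mu>. ent_term (Re \<mu>)) (proots (char_poly (A * B) * [:0, 1:] ^ k)))"
    unfolding vn_entropy_def by (rule ent_sum_zero_roots[OF char_poly_nz[OF AB], symmetric])
  also have "\<dots> = sum_mset (image_mset (\<lambda>\<mu>. ent_term (Re \<mu>)) (proots (char_poly (B * A) * [:0, 1:] ^ m)))"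
    by (simp add: char_poly_sylvester[OF A B] mult.commute)
  also have "\<dots> = vn_entropy (B * A)"
    unfolding vn_entropy_def by (rule ent_sum_zero_roots[OF char_poly_nz[OF BA]])
  finally show ?thesis .
qed

lemma vn_entropy_transpose:
  assumes "A \<in> carrier_mat n n" shows "vn_entropy (transpose_mat A) = vn_entropy A"
  unfolding vn_entropy_def using assms by simp

lemma vn_entropy_similar:
  assumes "similar_mat A (B :: complex mat)" shows "vn_entropy A = vn_entropy B"
  unfolding vn_entropy_def char_poly_similar[OF assms] ..



lemma xor_lt: "a < 2^n \<Longrightarrow> b < 2^n \<Longrightarrow> xor a b < (2::nat)^n"
  by (metis take_bit_nat_eq_self_iff take_bit_xor)

lemma bit_lt: "bit (c::nat) j \<Longrightarrow> c < 2^n \<Longrightarrow> j < n"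
proof (rule ccontr)
  assume b: "bit c j" and c: "c < 2^n" and "\<not> j < n"
  then have "(2::nat)^n \<le> 2^j" by (intro power_increasing) auto
  with c have "c < 2^j" by linarith
  then have "c div 2^j = 0" by simp
  with b show False by (simp add: bit_nat_def)
qed

lemma xor_xor_cancel: "xor (xor a b) b = (a::nat)"
  by (simp add: xor.assoc)

lemma f2dot_sym: "f2dot n x z = f2dot n z x"
  unfolding f2dot_def by (simp add: conj_commute)

lemma f2dot_zero: "f2dot n x 0 = False"
  unfolding f2dot_def by simp

lemma card_sym_diff_parity:
  assumes "finite A" "finite B"
  shows "odd (card {i. (i \<in> A) \<noteq> (i \<in> B)}) = (odd (card A) \<noteq> odd (card B))"
proof -
  have e: "{i. (i \<in> A) \<noteq> (i \<in> B)} = (A \<union> B) - (A \<inter> B)" by auto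
  have "card (A \<union> B) + card (A \<inter> B) = card A + card B" using card_Un_Int[OF assms] by simp
  moreover have "card ((A \<union> B) - (A \<inter> B)) = card (A \<union> B) - card (A \<inter> B)"
    by (rule card_Diff_subset) (use assms in auto)
  moreover have "card (A \<inter> B) \<le> card (A \<union> B)" by (rule card_mono) (use assms in auto)
  ultimately have "card {i. (i \<in> A) \<noteq> (i \<in> B)} + 2 * card (A \<inter> B) = card A + card B"
    unfolding e by linarith
  then have "odd (card {i. (i \<in> A) \<noteq> (i \<in> B)} + 2 * card (A \<inter> B)) = odd (card A + card B)"
    by simp
  then show ?thesis by simp
qed

lemma f2dot_xor2: "f2dot n x (xor y z) = (f2dot n x y \<noteq> f2dot n x z)"
proof -
  let ?A = "{i. i < n \<and> bit x i \<and> bit y i}" and ?B = "{i. i < n \<and> bit x i \<and> bit z i}"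
  have "{i. i < n \<and> bit x i \<and> bit (xor y z) i} = {i. (i \<in> ?A) \<noteq> (i \<in> ?B)}"
    by (auto simp: bit_xor_iff)
  then show ?thesis unfolding f2dot_def
    using card_sym_diff_parity[of ?A ?B] by simp
qed

lemma f2dot_xor1: "f2dot n (xor y z) x = (f2dot n y x \<noteq> f2dot n z x)"
  using f2dot_xor2 f2dot_sym by metis

lemma f2dot_pow: "j < n \<Longrightarrow> f2dot n (2^j) c = bit c j"
proof -
  assume j: "j < n"
  have "{i. i < n \<and> bit ((2::nat)^j) i \<and> bit c i} = (if bit c j then {j} else {})"
    using j by (auto simp: bit_exp_iff)
  then show ?thesis unfolding f2dot_def by simp
qed

definition sgn2 :: "bool \<Rightarrow> complex" where "sgn2 b = (if b then -1 else 1)"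

lemma char_sum:
  assumes c: "c < 2^n"
  shows "(\<Sum>x<2^n. sgn2 (f2dot n x c)) = (if c = 0 then 2^n else 0)"
proof (cases "c = 0")
  case True then show ?thesis by (simp add: f2dot_zero sgn2_def)
next
  case False
  then have "\<exists>j. bit c j" using bit_eq_iff[of c 0] by auto
  then obtain j where bj: "bit c j" by blast
  have j: "j < n" by (rule bit_lt[OF bj c])
  have p: "(2::nat)^j < 2^n" using j by simp
  let ?g = "\<lambda>x. sgn2 (f2dot n x c)"
  have "(\<Sum>x<2^n. ?g x) = (\<Sum>x<2^n. ?g (xor x (2^j)))"
  proof (rule sum.reindex_bij_witness[where i="\<lambda>x. xor x (2^j)" and j="\<lambda>x. xor x (2^j)"])
  qed (auto simp: xor_xor_cancel xor_lt[OF _ p])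
  also have "\<dots> = (\<Sum>x<2^n. - ?g x)"
    by (rule sum.cong) (auto simp: f2dot_xor1 f2dot_pow[OF j] bj sgn2_def)
  finally have "(\<Sum>x<2^n. ?g x) = 0" by (simp add: sum_negf)
  with False show ?thesis by simp
qed



lemma mult_entry:
  fixes A B :: "'a::comm_ring mat"
  assumes "A \<in> carrier_mat r m" "B \<in> carrier_mat m c" "i < r" "j < c"
  shows "(A * B) $$ (i,j) = (\<Sum>t<m. A $$ (i,t) * B $$ (t,j))"
  using assms by (auto simp: scalar_prod_def atLeast0LessThan intro: sum.cong)

lemma adjoint_entry:
  fixes A :: "complex mat"
  assumes "A \<in> carrier_mat r c" "i < c" "j < r"
  shows "mat_adjoint A $$ (i,j) = cnj (A $$ (j,i))"
  using assms unfolding mat_adjoint_def by (simp add: mat_of_rows_def conjugate_complex_def)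

lemma adjoint_carrier:
  fixes A :: "complex mat"
  assumes "A \<in> carrier_mat r c" shows "mat_adjoint A \<in> carrier_mat c r"
  using assms unfolding mat_adjoint_def mat_of_rows_def by auto

lemma sum_split_mult: "(\<Sum>r<(m::nat)*d. f r) = (\<Sum>x<m. \<Sum>i<d. f (x*d+i))"
proof (induct m)
  case (Suc m)
  have "(\<Sum>r<Suc m * d. f r) = (\<Sum>r<m*d. f r) + (\<Sum>r\<in>{m*d..<m*d+d}. f r)"
    by (simp add: add.commute sum.atLeastLessThan_concat[symmetric] atLeast0LessThan[symmetric])
  also have "(\<Sum>r\<in>{m*d..<m*d+d}. f r) = (\<Sum>i\<in>{0..<d}. f (i + m*d))"
    using sum.shift_bounds_nat_ivl[of f 0 "m*d" d] by (simp add: add.commute)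
  also have "\<dots> = (\<Sum>i<d. f (m*d+i))" by (simp add: atLeast0LessThan add.commute)
  finally show ?case using Suc by simp
qed simp



definition wE :: "nat \<Rightarrow> nat \<Rightarrow> nat \<Rightarrow> nat \<Rightarrow> nat \<Rightarrow> complex" where
  "wE n a b r c = (if r = xor c a then sgn2 (f2dot n c b) else 0)"

definition kbxy :: "nat \<Rightarrow> nat \<Rightarrow> nat \<Rightarrow> complex mat" where
  "kbxy d x y = mat d d (\<lambda>(i,j). if i = x \<and> j = y then 1 else 0)"

lemma ket_bra_kbxy: "ket_bra d x = kbxy d x x"
  unfolding ket_bra_def kbxy_def ..

lemma idx_lt: "i < (d::nat) \<Longrightarrow> k < e \<Longrightarrow> i * e + k < d * e"
proof -
  assume "i < d" "k < e"
  then have "i * e + k < i * e + e" by simp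
  also have "\<dots> = (i + 1) * e" by simp
  also have "\<dots> \<le> d * e" using \<open>i < d\<close> by (intro mult_right_mono) auto
  finally show ?thesis .
qed

lemma pauliXZ_entry:
  assumes "r < 2^n" "c < 2^n"
  shows "(pauliX n a * pauliZ n b) $$ (r,c) = wE n a b r c"
proof -
  have "(pauliX n a * pauliZ n b) $$ (r,c) = (\<Sum>t<2^n. pauliX n a $$ (r,t) * pauliZ n b $$ (t,c))"
    by (rule mult_entry[where m="2^n"]) (use assms in \<open>auto simp: pauliX_def pauliZ_def\<close>)
  also have "\<dots> = (\<Sum>t<2^n. if t = c then (if r = xor c a then sgn2 (f2dot n c b) else 0) else 0)"
    by (rule sum.cong) (use assms in \<open>auto simp: pauliX_def pauliZ_def sgn2_def\<close>)
  also have "\<dots> = wE n a b r c" using assms by (simp add: wE_def)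
  finally show ?thesis .
qed

lemma pauliXZ_carrier: "pauliX n a * pauliZ n b \<in> carrier_mat (2^n) (2^n)"
  by (rule mult_carrier_mat) (auto simp: pauliX_def pauliZ_def)

lemma kb_conj:
  fixes W :: "complex mat"
  assumes W: "W \<in> carrier_mat N d" and xy: "x < d" "y < d" and ij: "i < N" "j < N"
  shows "(W * kbxy d x y * mat_adjoint W) $$ (i,j) = W $$ (i,x) * cnj (W $$ (j,y))"
proof -
  have K: "kbxy d x y \<in> carrier_mat d d" by (simp add: kbxy_def)
  have WK: "W * kbxy d x y \<in> carrier_mat N d" using W K by simp
  have WA: "mat_adjoint W \<in> carrier_mat d N" by (rule adjoint_carrier[OF W])
  have e1: "\<And>c. c < d \<Longrightarrow> (W * kbxy d x y) $$ (i,c) = (if c = y then W $$ (i,x) else 0)"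
  proof -
    fix c assume c: "c < d"
    have "(W * kbxy d x y) $$ (i,c) = (\<Sum>t<d. W $$ (i,t) * kbxy d x y $$ (t,c))"
      by (rule mult_entry[OF W K ij(1) c])
    also have "\<dots> = (\<Sum>t<d. if t = x then (if c = y then W $$ (i,x) else 0) else 0)"
      by (rule sum.cong) (use c in \<open>auto simp: kbxy_def\<close>)
    also have "\<dots> = (if c = y then W $$ (i,x) else 0)" using xy by simp
    finally show "(W * kbxy d x y) $$ (i,c) = (if c = y then W $$ (i,x) else 0)" .
  qed
  have "(W * kbxy d x y * mat_adjoint W) $$ (i,j) = (\<Sum>c<d. (W * kbxy d x y) $$ (i,c) * mat_adjoint W $$ (c,j))"
    by (rule mult_entry[OF WK WA ij(1) ij(2)])
  also have "\<dots> = (\<Sum>c<d. if c = y then W $$ (i,x) * cnj (W $$ (j,y)) else 0)"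
    by (rule sum.cong) (auto simp: e1 adjoint_entry[OF W _ ij(2)])
  also have "\<dots> = W $$ (i,x) * cnj (W $$ (j,y))" using xy by simp
  finally show ?thesis .
qed

lemma channel_kb:
  assumes "x < 2^n" "y < 2^n" "i < 2^n" "j < 2^n"
  shows "pauli_channel n P (kbxy (2^n) x y) $$ (i,j) =
    (\<Sum>a<2^n. \<Sum>b<2^n. complex_of_real (P a b) * (wE n a b i x * cnj (wE n a b j y)))"
  using assms
  by (simp add: pauli_channel_def kb_conj[OF pauliXZ_carrier] pauliXZ_entry)

lemma env_kb:
  fixes V :: "complex mat"
  assumes st: "stinespring d e \<Lambda> V" and xy: "x < d" "y < d" and ij: "i < d" "j < d"
  shows "(\<Sum>k<e. V $$ (i*e+k, x) * cnj (V $$ (j*e+k, y))) = \<Lambda> (kbxy d x y) $$ (i,j)"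
proof -
  have V: "V \<in> carrier_mat (d*e) d" using st by (simp add: stinespring_def)
  have "\<Lambda> (kbxy d x y) = ptrace_E d e (V * kbxy d x y * mat_adjoint V)"
    using st by (simp add: stinespring_def kbxy_def)
  then show ?thesis using ij
    by (simp add: ptrace_E_def kb_conj[OF V xy] idx_lt)
qed



lemma xor_eq_iff: "((i::nat) = xor x a) = (a = xor x i)"
  by (metis xor_xor_cancel xor.commute xor.left_commute)

lemma xor_xor_cancel2[simp]: "xor x (xor x i) = (i::nat)" by (simp add: xor.assoc[symmetric])

lemma sgn2_cnj[simp]: "cnj (sgn2 b) = sgn2 b" by (simp add: sgn2_def)
lemma sgn2_sq[simp]: "sgn2 b * sgn2 b = 1" by (simp add: sgn2_def)
lemma sgn2_mult: "sgn2 b * sgn2 c = sgn2 (b \<noteq> c)" by (simp add: sgn2_def)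

lemma channel_diag:
  assumes "x < 2^n" "i < 2^n" "j < 2^n"
  shows "pauli_channel n P (kbxy (2^n) x x) $$ (i,j) =
     (if i = j then complex_of_real (\<Sum>b<2^n. P (xor x i) b) else 0)"
proof -
  have xi: "xor x i < 2^n" using assms by (simp add: xor_lt)
  have "pauli_channel n P (kbxy (2^n) x x) $$ (i,j) =
    (\<Sum>a<2^n. \<Sum>b<2^n. complex_of_real (P a b) * (wE n a b i x * cnj (wE n a b j x)))"
    by (rule channel_kb) (use assms in auto)
  also have "\<dots> = (\<Sum>a<2^n. if a = xor x i then (if i = j then (\<Sum>b<2^n. complex_of_real (P a b)) else 0) else 0)"
    by (rule sum.cong) (auto simp: wE_def xor_eq_iff)
  also have "\<dots> = (if i = j then complex_of_real (\<Sum>b<2^n. P (xor x i) b) else 0)"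
    using xi by simp
  finally show ?thesis .
qed

lemma rho_entropy:
  fixes V :: "complex mat"
  assumes st: "stinespring (2^n) e (pauli_channel n P) V" and x: "x < 2^n"
  shows "vn_entropy (compl_channel (2^n) e V (ket_bra (2^n) x)) = (\<Sum>a<2^n. ent_term (\<Sum>b<2^n. P a b))"
proof -
  define d where "d = (2::nat)^n"
  have V: "V \<in> carrier_mat (d*e) d" using st by (simp add: stinespring_def d_def)
  define M where "M = mat d e (\<lambda>(i,k). V $$ (i*e+k, x))"
  have M: "M \<in> carrier_mat d e" by (simp add: M_def)
  have MA: "mat_adjoint M \<in> carrier_mat e d" by (rule adjoint_carrier[OF M])
  have Mad: "\<And>k i. k < e \<Longrightarrow> i < d \<Longrightarrow> mat_adjoint M $$ (k,i) = cnj (V $$ (i*e+k, x))"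
    using adjoint_entry[OF M] by (simp add: M_def)
  have Me: "\<And>k i. k < e \<Longrightarrow> i < d \<Longrightarrow> M $$ (i,k) = V $$ (i*e+k, x)"
    by (simp add: M_def)
  have xd: "x < d" using x by (simp add: d_def)
  have rho: "compl_channel d e V (ket_bra d x) = transpose_mat (mat_adjoint M * M)"
  proof (rule eq_matI)
    fix k l assume kl: "k < dim_row (transpose_mat (mat_adjoint M * M))" "l < dim_col (transpose_mat (mat_adjoint M * M))"
    then have k: "k < e" and l: "l < e" using M MA by auto
    have "transpose_mat (mat_adjoint M * M) $$ (k,l) = (mat_adjoint M * M) $$ (l,k)"
      using k l M MA by simp
    also have "\<dots> = (\<Sum>i<d. mat_adjoint M $$ (l,i) * M $$ (i,k))"
      by (rule mult_entry[OF MA M l k])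
    also have "\<dots> = (\<Sum>i<d. V $$ (i*e+k, x) * cnj (V $$ (i*e+l, x)))"
      by (rule sum.cong) (use k l in \<open>auto simp: Mad Me\<close>)
    also have "\<dots> = compl_channel d e V (ket_bra d x) $$ (k,l)"
      using k l by (simp add: compl_channel_def ptrace_H_def ket_bra_kbxy kb_conj[OF V xd xd] idx_lt)
    finally show "compl_channel d e V (ket_bra d x) $$ (k,l) = transpose_mat (mat_adjoint M * M) $$ (k,l)" by simp
  qed (use M MA in \<open>auto simp: compl_channel_def ptrace_H_def\<close>)
  define Dx where "Dx = mat d d (\<lambda>(i,j). if i = j then complex_of_real (\<Sum>b<2^n. P (xor x i) b) else 0)"
  have MM: "M * mat_adjoint M = Dx"
  proof (rule eq_matI)
    fix i j assume "i < dim_row Dx" "j < dim_col Dx"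
    then have i: "i < d" and j: "j < d" by (auto simp: Dx_def)
    have "(M * mat_adjoint M) $$ (i,j) = (\<Sum>k<e. M $$ (i,k) * mat_adjoint M $$ (k,j))"
      by (rule mult_entry[OF M MA i j])
    also have "\<dots> = (\<Sum>k<e. V $$ (i*e+k, x) * cnj (V $$ (j*e+k, x)))"
      by (rule sum.cong) (use i j in \<open>auto simp: Mad Me\<close>)
    also have "\<dots> = pauli_channel n P (kbxy d x x) $$ (i,j)"
      by (rule env_kb[OF st[folded d_def] xd xd i j])
    also have "\<dots> = Dx $$ (i,j)" using i j x
      by (simp add: channel_diag d_def Dx_def)
    finally show "(M * mat_adjoint M) $$ (i,j) = Dx $$ (i,j)" .
  qed (use M MA in \<open>auto simp: Dx_def\<close>)
  have "vn_entropy (compl_channel d e V (ket_bra d x)) = vn_entropy (mat_adjoint M * M)"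
    unfolding rho by (rule vn_entropy_transpose) (use M MA in auto)
  also have "\<dots> = vn_entropy (M * mat_adjoint M)" by (rule vn_entropy_sylvester[OF MA M])
  also have "\<dots> = (\<Sum>i<d. ent_term (Re (Dx $$ (i,i))))"
    unfolding MM by (rule vn_entropy_upper_triangular) (auto simp: Dx_def upper_triangular_def)
  also have "\<dots> = (\<Sum>i<d. ent_term (\<Sum>b<2^n. P (xor x i) b))"
    by (rule sum.cong) (auto simp: Dx_def)
  also have "\<dots> = (\<Sum>a<d. ent_term (\<Sum>b<2^n. P a b))"
  proof (rule sum.reindex_bij_witness[where i="\<lambda>a. xor x a" and j="\<lambda>i. xor x i"])
  qed (use xd in \<open>auto simp: d_def xor_lt xor.assoc[symmetric]\<close>)
  finally show ?thesis by (simp add: d_def)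
qed



lemma divmod_simps[simp]: "i < (d::nat) \<Longrightarrow> (x * d + i) div d = x" "i < d \<Longrightarrow> (x * d + i) mod d = i"
  by auto

lemma lt_mult_sq: "x < (d::nat) \<Longrightarrow> i < d \<Longrightarrow> x * d + i < d * d"
  using idx_lt by simp

lemma xor_eq0: "xor b b' = (0::nat) \<longleftrightarrow> b = b'"
  by (metis xor_xor_cancel xor.left_neutral xor_self_eq)

lemma QU_sum:
  assumes a: "a < 2^n" "a' < 2^n" and b: "b < 2^n" "b' < 2^n"
  shows "(\<Sum>x<2^n. \<Sum>i<(2::nat)^n. cnj (wE n a b i x) * wE n a' b' i x) = (if a = a' \<and> b = b' then 2^n else 0)"
proof -
  have "(\<Sum>x<2^n. \<Sum>i<(2::nat)^n. cnj (wE n a b i x) * wE n a' b' i x)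
     = (\<Sum>x<2^n. if a = a' then sgn2 (f2dot n x (xor b b')) else 0)"
  proof (rule sum.cong)
    fix x assume "x \<in> {..<(2::nat)^n}"
    then have xa: "xor x a < 2^n" using a by (simp add: xor_lt)
    have "(\<Sum>i<(2::nat)^n. cnj (wE n a b i x) * wE n a' b' i x)
        = (\<Sum>i<(2::nat)^n. if i = xor x a then (if a = a' then sgn2 (f2dot n x (xor b b')) else 0) else 0)"
      by (rule sum.cong) (auto simp: wE_def sgn2_mult f2dot_xor2 xor_eq_iff)
    also have "\<dots> = (if a = a' then sgn2 (f2dot n x (xor b b')) else 0)" using xa by simp
    finally show "(\<Sum>i<(2::nat)^n. cnj (wE n a b i x) * wE n a' b' i x) = (if a = a' then sgn2 (f2dot n x (xor b b')) else 0)" .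
  qed simp
  also have "\<dots> = (if a = a' then (\<Sum>x<2^n. sgn2 (f2dot n x (xor b b'))) else 0)" by simp
  also have "\<dots> = (if a = a' \<and> b = b' then 2^n else 0)"
    by (subst char_sum) (use b in \<open>auto simp: xor_lt xor_eq0\<close>)
  finally show ?thesis .
qed

lemma divmod_lt: "c < (d::nat) * d \<Longrightarrow> c div d < d" "c < d * d \<Longrightarrow> c mod d < d"
  by (auto simp: less_mult_imp_div_less) (metis mod_less_divisor mult_0 neq0_conv not_less0)

lemma eq_divmod: "(c = (c'::nat)) = (c div d = c' div d \<and> c mod d = c' mod d)"
  by (metis div_mult_mod_eq)

lemma avg_entropy:
  fixes V :: "complex mat"
  assumes st: "stinespring (2^n) e (pauli_channel n P) V"
  shows "vn_entropy (mat e e (\<lambda>(i,j). \<Sum>k<2^n. complex_of_real (1 / 2^n) *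
            compl_channel (2^n) e V (ket_bra (2^n) k) $$ (i,j)))
       = (\<Sum>a<2^n. \<Sum>b<2^n. ent_term (P a b))"
proof -
  define d where "d = (2::nat)^n"
  have d0: "d > 0" by (simp add: d_def)
  have V: "V \<in> carrier_mat (d*e) d" using st by (simp add: stinespring_def d_def)
  define avg where "avg = mat e e (\<lambda>(i,j). \<Sum>k<d. complex_of_real (1 / d) *
            compl_channel d e V (ket_bra d k) $$ (i,j))"
  define G where "G = mat (d*d) e (\<lambda>(r,k). V $$ ((r mod d)*e+k, r div d))"
  define Aa where "Aa = mat e (d*d) (\<lambda>(k,r). complex_of_real (1/d) * cnj (V $$ ((r mod d)*e+k, r div d)))"
  have G: "G \<in> carrier_mat (d*d) e" by (simp add: G_def)
  have Aa: "Aa \<in> carrier_mat e (d*d)" by (simp add: Aa_def)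
  have rho_e: "\<And>x k l. x < d \<Longrightarrow> k < e \<Longrightarrow> l < e \<Longrightarrow> compl_channel d e V (ket_bra d x) $$ (k,l)
      = (\<Sum>i<d. V $$ (i*e+k, x) * cnj (V $$ (i*e+l, x)))"
    by (simp add: compl_channel_def ptrace_H_def ket_bra_kbxy kb_conj[OF V] idx_lt)
  have avgT: "avg = transpose_mat (Aa * G)"
  proof (rule eq_matI)
    fix k l assume "k < dim_row (transpose_mat (Aa * G))" "l < dim_col (transpose_mat (Aa * G))"
    then have k: "k < e" and l: "l < e" using G Aa by auto
    have "transpose_mat (Aa * G) $$ (k,l) = (Aa * G) $$ (l,k)" using k l G Aa by simp
    also have "\<dots> = (\<Sum>r<d*d. Aa $$ (l,r) * G $$ (r,k))" by (rule mult_entry[OF Aa G l k])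
    also have "\<dots> = (\<Sum>x<d. \<Sum>i<d. Aa $$ (l,x*d+i) * G $$ (x*d+i,k))" by (rule sum_split_mult)
    also have "\<dots> = (\<Sum>x<d. complex_of_real (1 / d) * (\<Sum>i<d. V $$ (i*e+k, x) * cnj (V $$ (i*e+l, x))))"
      unfolding sum_distrib_left
      by (intro sum.cong refl) (use k l in \<open>auto simp: Aa_def G_def lt_mult_sq\<close>)
    also have "\<dots> = avg $$ (k,l)" using k l by (simp add: avg_def rho_e)
    finally show "avg $$ (k,l) = transpose_mat (Aa * G) $$ (k,l)" by simp
  qed (use G Aa in \<open>auto simp: avg_def\<close>)
  define U where "U = mat (d*d) (d*d) (\<lambda>(r,c). wE n (c div d) (c mod d) (r mod d) (r div d))"
  define Q where "Q = mat (d*d) (d*d) (\<lambda>(c,s). complex_of_real (1/d) * cnj (wE n (c div d) (c mod d) (s mod d) (s div d)))"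
  define Dg where "Dg = mat (d*d) (d*d) (\<lambda>(r,c). if r = c then complex_of_real (P (r div d) (r mod d)) else 0)"
  have U: "U \<in> carrier_mat (d*d) (d*d)" and Q: "Q \<in> carrier_mat (d*d) (d*d)" and Dg: "Dg \<in> carrier_mat (d*d) (d*d)"
    by (auto simp: U_def Q_def Dg_def)
  have QU: "Q * U = 1\<^sub>m (d*d)"
  proof (rule eq_matI)
    fix c c' assume "c < dim_row (1\<^sub>m (d*d))" "c' < dim_col (1\<^sub>m (d*d) :: complex mat)"
    then have c: "c < d*d" and c': "c' < d*d" by auto
    have "(Q * U) $$ (c,c') = (\<Sum>r<d*d. Q $$ (c,r) * U $$ (r,c'))" by (rule mult_entry[OF Q U c c'])
    also have "\<dots> = (\<Sum>x<d. \<Sum>i<d. Q $$ (c,x*d+i) * U $$ (x*d+i,c'))" by (rule sum_split_mult)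
    also have "\<dots> = complex_of_real (1/d) * (\<Sum>x<d. \<Sum>i<d. cnj (wE n (c div d) (c mod d) i x) * wE n (c' div d) (c' mod d) i x)"
      unfolding sum_distrib_left
      by (intro sum.cong refl) (use c c' in \<open>auto simp: Q_def U_def lt_mult_sq\<close>)
    also have "\<dots> = complex_of_real (1/d) * (if c div d = c' div d \<and> c mod d = c' mod d then of_nat d else 0)"
      using QU_sum[of "c div d" n "c' div d" "c mod d" "c' mod d"] divmod_lt[OF c] divmod_lt[OF c']
      by (simp add: d_def)
    also have "\<dots> = 1\<^sub>m (d*d) $$ (c,c')" using c c' d0 by (simp add: eq_divmod[of c c' d, symmetric])
    finally show "(Q * U) $$ (c,c') = 1\<^sub>m (d*d) $$ (c,c')" .
  qed (use Q U in auto)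
  have UQ: "U * Q = 1\<^sub>m (d*d)" by (rule mat_mult_left_right_inverse[OF Q U QU])
  have UD: "\<And>r c. r < d*d \<Longrightarrow> c < d*d \<Longrightarrow> (U * Dg) $$ (r,c) = U $$ (r,c) * complex_of_real (P (c div d) (c mod d))"
  proof -
    fix r c assume r: "r < d*d" and c: "c < d*d"
    have "(U * Dg) $$ (r,c) = (\<Sum>t<d*d. U $$ (r,t) * Dg $$ (t,c))" by (rule mult_entry[OF U Dg r c])
    also have "\<dots> = (\<Sum>t<d*d. if t = c then U $$ (r,c) * complex_of_real (P (c div d) (c mod d)) else 0)"
      by (rule sum.cong) (use c in \<open>auto simp: Dg_def\<close>)
    also have "\<dots> = U $$ (r,c) * complex_of_real (P (c div d) (c mod d))" using c by simp
    finally show "(U * Dg) $$ (r,c) = U $$ (r,c) * complex_of_real (P (c div d) (c mod d))" .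
  qed
  have UD_c: "U * Dg \<in> carrier_mat (d*d) (d*d)" using U Dg by simp
  have GA: "G * Aa = U * Dg * Q"
  proof (rule eq_matI)
    fix r s assume "r < dim_row (U * Dg * Q)" "s < dim_col (U * Dg * Q)"
    then have r: "r < d*d" and s: "s < d*d" using U Dg Q by auto
    note rd = divmod_lt[OF r] and sd = divmod_lt[OF s]
    have "(G * Aa) $$ (r,s) = (\<Sum>k<e. G $$ (r,k) * Aa $$ (k,s))" by (rule mult_entry[OF G Aa r s])
    also have "\<dots> = complex_of_real (1/d) * (\<Sum>k<e. V $$ ((r mod d)*e+k, r div d) * cnj (V $$ ((s mod d)*e+k, s div d)))"
      unfolding sum_distrib_left by (intro sum.cong refl) (use r s in \<open>auto simp: G_def Aa_def\<close>)
    also have "\<dots> = complex_of_real (1/d) * pauli_channel n P (kbxy d (r div d) (s div d)) $$ (r mod d, s mod d)"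
      by (subst env_kb[OF st[folded d_def]]) (use rd sd in auto)
    also have "\<dots> = complex_of_real (1/d) * (\<Sum>a<d. \<Sum>b<d. complex_of_real (P a b) *
          (wE n a b (r mod d) (r div d) * cnj (wE n a b (s mod d) (s div d))))"
      using channel_kb[of "r div d" n "s div d" "r mod d" "s mod d" P] rd sd by (simp add: d_def)
    also have "\<dots> = (\<Sum>c<d*d. U $$ (r,c) * complex_of_real (P (c div d) (c mod d)) * Q $$ (c,s))"
      unfolding sum_split_mult sum_distrib_left
      by (intro sum.cong refl) (use r s in \<open>auto simp: U_def Q_def lt_mult_sq\<close>)
    also have "\<dots> = (\<Sum>c<d*d. (U * Dg) $$ (r,c) * Q $$ (c,s))"
      by (intro sum.cong refl) (use r in \<open>auto simp: UD\<close>)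
    also have "\<dots> = (U * Dg * Q) $$ (r,s)" by (rule mult_entry[OF UD_c Q r s, symmetric])
    finally show "(G * Aa) $$ (r,s) = (U * Dg * Q) $$ (r,s)" .
  qed (use G Aa U Dg Q in auto)
  have sim: "similar_mat (G * Aa) Dg"
    by (rule similar_matI[where n="d*d" and P=U and Q=Q]) (use G Aa U Dg Q UQ QU GA in auto)
  have "vn_entropy avg = vn_entropy (Aa * G)"
    unfolding avgT by (rule vn_entropy_transpose) (use Aa G in auto)
  also have "\<dots> = vn_entropy (G * Aa)" by (rule vn_entropy_sylvester[OF Aa G])
  also have "\<dots> = vn_entropy Dg" by (rule vn_entropy_similar[OF sim])
  also have "\<dots> = (\<Sum>r<d*d. ent_term (Re (Dg $$ (r,r))))"
    by (rule vn_entropy_upper_triangular[OF Dg]) (auto simp: Dg_def upper_triangular_def)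
  also have "\<dots> = (\<Sum>a<d. \<Sum>b<d. ent_term (P a b))"
    unfolding sum_split_mult by (intro sum.cong refl) (auto simp: Dg_def lt_mult_sq)
  finally show ?thesis by (simp add: avg_def d_def)
qed


theorem lemma2:
  fixes n dE :: nat and P :: "nat \<Rightarrow> nat \<Rightarrow> real" and V :: "complex mat"
  assumes "pauli_dist n P"
    and "stinespring (2^n) dE (pauli_channel n P) V"
  shows "holevo dE (2^n) (\<lambda>_. 1 / 2^n) (\<lambda>x. compl_channel (2^n) dE V (ket_bra (2^n) x))
           \<le> eta n (1 - PZ n P 0)"
proof -
  have "holevo dE (2^n) (\<lambda>_. 1 / 2^n) (\<lambda>x. compl_channel (2^n) dE V (ket_bra (2^n) x))
     = (\<Sum>a<2^n. \<Sum>b<2^n. ent_term (P a b)) - (\<Sum>k<(2::nat)^n. 1 / 2^n * (\<Sum>a<2^n. ent_term (\<Sum>b<2^n. P a b)))"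
    unfolding holevo_def avg_entropy[OF assms(2)]
    by (intro arg_cong2[where f="(-)"] refl sum.cong) (auto simp: rho_entropy[OF assms(2)])
  also have "\<dots> = (\<Sum>a<2^n. \<Sum>b<2^n. ent_term (P a b)) - (\<Sum>a<2^n. ent_term (\<Sum>b<2^n. P a b))"
    by simp
  also have "\<dots> \<le> eta n (1 - PZ n P 0)" by (rule info_ineq[OF assms(1)])
  finally show ?thesis .
qed

end
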